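(* Let $\theta>0$, $a>0$, $\mu\in\mathbb{R}$, $\Delta>0$, and set $b(s)=-\theta(s-\mu)$ and $\hat\sigma(s)=\sqrt{2\theta a(s^2+1)}$. Let $W\sim N(0,\Delta)$ and define, for a real random variable $S$ independent of $W$, the random variable $\mathcal{A}S=S+\Delta\, b(S)+\hat\sigma(S)\,W$. If $S_1,S_2$ are real random variables independent of $W$ (with finite first moments) such that $\mathbb{E}h(S_1)\le \mathbb{E}h(S_2)$ for every convex $h:\mathbb{R}\to\mathbb{R}$, then $\mathbb{E}h(\mathcal{A}S_1)\le \mathbb{E}h(\mathcal{A}S_2)$ for every convex $h:\mathbb{R}\to\mathbb{R}$.
   Context: Expectations of convex functions are allowed to take the value $+\infty$. *)

theory Defs
  imports "HOL-Probability.Probability"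
begin

text \<open>Extended-real expectation: positive part minus negative part, so that the
value may be \<open>+\<infinity>\<close> (the convention of the paper for convex functions).\<close>
definition ext_expectation :: "'a measure \<Rightarrow> ('a \<Rightarrow> real) \<Rightarrow> ereal" where
  "ext_expectation M X =
     enn2ereal (\<integral>\<^sup>+ x. ennreal (X x) \<partial>M) - enn2ereal (\<integral>\<^sup>+ x. ennreal (- X x) \<partial>M)"

definition drift_b :: "real \<Rightarrow> real \<Rightarrow> real \<Rightarrow> real" where
  "drift_b \<theta> \<mu> s = - \<theta> * (s - \<mu>)"

definition sigma_hat :: "real \<Rightarrow> real \<Rightarrow> real \<Rightarrow> real" where
  "sigma_hat \<theta> a s = sqrt (2 * \<theta> * a * (s\<^sup>2 + 1))"

definition step_op :: "real \<Rightarrow> real \<Rightarrow> real \<Rightarrow> real \<Rightarrow> ('w \<Rightarrow> real) \<Rightarrow> ('w \<Rightarrow> real) \<Rightarrow> 'w \<Rightarrow> real" where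
  "step_op \<theta> a \<mu> \<Delta> W S = (\<lambda>\<omega>. S \<omega> + \<Delta> * drift_b \<theta> \<mu> (S \<omega>) + sigma_hat \<theta> a (S \<omega>) * W \<omega>)"

end

theory Submission
  imports Defs
begin


lemma ext_exp_split:
  assumes fm: "finite_measure M" and [measurable]: "f \<in> borel_measurable M" "k \<in> borel_measurable M"
    and k0: "\<And>x. 0 \<le> k x" and L: "integrable M L" and eq: "\<And>x. x \<in> space M \<Longrightarrow> f x = k x + L x"
  shows "ext_expectation M f = enn2ereal (\<integral>\<^sup>+x. k x \<partial>M) + ereal (\<integral>x. L x \<partial>M)"
proof -
  have [measurable]: "L \<in> borel_measurable M" using L by auto
  have A: "(\<integral>\<^sup>+x. ennreal (norm (L x)) \<partial>M) < \<infinity>" using L by (simp add: integrable_iff_bounded)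
  have Q: "(\<integral>\<^sup>+x. ennreal (- f x) \<partial>M) \<le> (\<integral>\<^sup>+x. ennreal (norm (L x)) \<partial>M)"
    apply (intro nn_integral_mono ennreal_leI)
    using eq k0 by (smt (verit) real_norm_def)
  show ?thesis
  proof (cases "(\<integral>\<^sup>+x. k x \<partial>M) = \<infinity>")
    case True
    have "(\<integral>\<^sup>+x. k x \<partial>M) \<le> (\<integral>\<^sup>+x. ennreal (f x) + ennreal (norm (L x)) \<partial>M)"
    proof (intro nn_integral_mono)
      fix x assume x: "x \<in> space M"
      have "ennreal (k x) \<le> ennreal (max (f x) 0 + norm (L x))"
        using eq[OF x] k0[of x] by (intro ennreal_leI) (auto simp: max_def)
      also have "\<dots> = ennreal (max (f x) 0) + ennreal (norm (L x))"
        by (rule ennreal_plus) auto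
      also have "ennreal (max (f x) 0) = ennreal (f x)" by (cases "f x \<ge> 0") (auto simp: max_def ennreal_neg)
      finally show "ennreal (k x) \<le> ennreal (f x) + ennreal (norm (L x))" .
    qed
    also have "\<dots> = (\<integral>\<^sup>+x. ennreal (f x) \<partial>M) + (\<integral>\<^sup>+x. ennreal (norm (L x)) \<partial>M)"
      by (rule nn_integral_add) auto
    finally have P: "(\<integral>\<^sup>+x. ennreal (f x) \<partial>M) = \<infinity>" using True A
      by (auto simp: top_unique ennreal_add_eq_top)
    have Qf: "(\<integral>\<^sup>+x. ennreal (- f x) \<partial>M) < \<infinity>" using Q A by auto
    then obtain q where q: "(\<integral>\<^sup>+x. ennreal (- f x) \<partial>M) = ennreal q" "q \<ge> 0"
      by (cases "(\<integral>\<^sup>+x. ennreal (- f x) \<partial>M)" rule: ennreal_cases) auto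
    show ?thesis unfolding ext_expectation_def P True q by simp
  next
    case False
    then obtain c where c: "(\<integral>\<^sup>+x. k x \<partial>M) = ennreal c" "c \<ge> 0"
      by (cases "(\<integral>\<^sup>+x. k x \<partial>M)" rule: ennreal_cases) auto
    have ik: "integrable M k" by (rule integrableI_nn_integral_finite[OF _ _ c(1)]) (auto simp: k0)
    have intk: "(\<integral>x. k x \<partial>M) = c"
      using nn_integral_eq_integral[OF ik] k0 c by auto
    have fi: "integrable M f" using Bochner_Integration.integrable_add[OF ik L] by (simp add: Bochner_Integration.integrable_cong[OF refl eq])
    have intf: "(\<integral>x. f x \<partial>M) = c + (\<integral>x. L x \<partial>M)"
    proof -
      have "(\<integral>x. f x \<partial>M) = (\<integral>x. k x + L x \<partial>M)"
        by (rule Bochner_Integration.integral_cong) (auto simp: eq)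
      then show ?thesis using Bochner_Integration.integral_add[OF ik L] intk by simp
    qed
    have Pf: "(\<integral>\<^sup>+x. ennreal (f x) \<partial>M) < \<infinity>" and Qf: "(\<integral>\<^sup>+x. ennreal (- f x) \<partial>M) < \<infinity>"
      using fi by (auto simp: real_integrable_def top.not_eq_extremum)
    obtain p where p: "(\<integral>\<^sup>+x. ennreal (f x) \<partial>M) = ennreal p" "p \<ge> 0"
      using Pf by (cases "(\<integral>\<^sup>+x. ennreal (f x) \<partial>M)" rule: ennreal_cases) auto
    obtain q where q: "(\<integral>\<^sup>+x. ennreal (- f x) \<partial>M) = ennreal q" "q \<ge> 0"
      using Qf by (cases "(\<integral>\<^sup>+x. ennreal (- f x) \<partial>M)" rule: ennreal_cases) auto
    have "(\<integral>x. f x \<partial>M) = p - q" using real_lebesgue_integral_def[OF fi] p q by simp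
    then show ?thesis unfolding ext_expectation_def p q c using intf c p(2) q(2) by (simp add: enn2ereal_ennreal)
  qed
qed



lemma convex_subgrad:
  fixes h :: "real \<Rightarrow> real"
  assumes h: "convex_on UNIV h"
  shows "\<exists>c. \<forall>t. h 0 + c * t \<le> h t"
proof -
  have sl: "(h u - h 0) / u \<le> (h v - h 0) / v" if "u < 0" "0 < v" for u v
  proof -
    have "(h u - h 0) / (u - 0) \<le> (h u - h v) / (u - v)"
      using convex_on_slope_le(1)[OF h, of u v 0] that by auto
    also have "\<dots> \<le> (h 0 - h v) / (0 - v)"
      using convex_on_slope_le(2)[OF h, of u v 0] that by auto
    also have "(h 0 - h v) / (0 - v) = (h v - h 0) / v"
      by (metis diff_0 minus_diff_eq minus_divide_divide)
    finally show ?thesis by simp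
  qed
  define c where "c = (SUP u\<in>{..<0::real}. (h u - h 0) / u)"
  have bdd: "bdd_above ((\<lambda>u. (h u - h 0) / u) ` {..<0::real})"
    using sl[of _ 1] by (auto intro!: bdd_aboveI2)
  have "h 0 + c * t \<le> h t" for t
  proof (cases t "0::real" rule: linorder_cases)
    case less
    have "(h t - h 0) / t \<le> c" unfolding c_def using less bdd by (intro cSUP_upper) auto
    then show ?thesis using less by (simp add: divide_le_eq algebra_simps)
  next
    case greater
    have "c \<le> (h t - h 0) / t" unfolding c_def using greater sl by (intro cSUP_least) auto
    then show ?thesis using greater by (simp add: le_divide_eq algebra_simps)
  qed simp
  then show ?thesis by blast
qed



lemma sqrt_sq1_convex:
  fixes l s1 s2 :: real
  assumes "0 \<le> l" "l \<le> 1"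
  shows "sqrt ((l* s1 + (1-l)* s2)\<^sup>2 + 1) \<le> l * sqrt (s1\<^sup>2 + 1) + (1-l) * sqrt (s2\<^sup>2+1)"
proof -
  define A where "A = sqrt (s1\<^sup>2 + 1)"
  define B where "B = sqrt (s2\<^sup>2 + 1)"
  have A2: "A\<^sup>2 = s1\<^sup>2 + 1" and B2: "B\<^sup>2 = s2\<^sup>2 + 1" unfolding A_def B_def by simp_all
  have "A * B = sqrt ((s1\<^sup>2 + 1) * (s2\<^sup>2 + 1))" unfolding A_def B_def by (simp add: real_sqrt_mult)
  also have "s1 * s2 + 1 \<le> \<dots>"
  proof (rule real_le_rsqrt)
    have "0 \<le> (s1 - s2)\<^sup>2" by simp
    then show "(s1 * s2 + 1)\<^sup>2 \<le> (s1\<^sup>2 + 1) * (s2\<^sup>2 + 1)" by (simp add: power2_eq_square algebra_simps)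
  qed
  finally have AB: "s1 * s2 + 1 \<le> A * B" .
  have "(l* s1 + (1-l)* s2)\<^sup>2 + 1 \<le> (l * A + (1-l) * B)\<^sup>2"
  proof -
    have "(l * A + (1-l) * B)\<^sup>2 = l\<^sup>2 * A\<^sup>2 + (1-l)\<^sup>2 * B\<^sup>2 + 2 * (l * (1-l)) * (A * B)"
      by (simp add: power2_eq_square algebra_simps)
    also have "\<dots> \<ge> l\<^sup>2 * A\<^sup>2 + (1-l)\<^sup>2 * B\<^sup>2 + 2 * (l * (1-l)) * (s1 * s2 + 1)"
      using AB assms by (intro add_left_mono mult_left_mono) auto
    finally show ?thesis unfolding A2 B2 by (simp add: power2_eq_square algebra_simps)
  qed
  then have "sqrt ((l* s1 + (1-l)* s2)\<^sup>2 + 1) \<le> sqrt ((l * A + (1-l) * B)\<^sup>2)"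
    by (rule real_sqrt_le_mono)
  also have "\<dots> = l * A + (1-l) * B" using assms unfolding A_def B_def by simp
  finally show ?thesis unfolding A_def B_def .
qed

lemma sigma_hat_convex:
  assumes "0 \<le> \<theta> * a" "0 \<le> l" "l \<le> 1"
  shows "sigma_hat \<theta> a (l* s1 + (1-l)* s2) \<le> l * sigma_hat \<theta> a s1 + (1-l) * sigma_hat \<theta> a s2"
proof -
  have e: "sigma_hat \<theta> a s = sqrt (2*\<theta>*a) * sqrt (s\<^sup>2 + 1)" for s
    unfolding sigma_hat_def by (simp add: real_sqrt_mult)
  show ?thesis unfolding e
    using mult_left_mono[OF sqrt_sq1_convex[OF assms(2,3), of s1 s2], of "sqrt (2*\<theta>*a)"] assms
    by (simp add: algebra_simps)
qed

lemma sigma_hat_nonneg: "0 \<le> \<theta> * a \<Longrightarrow> 0 \<le> sigma_hat \<theta> a s"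
  unfolding sigma_hat_def by (simp add: mult.assoc[symmetric])



definition FF :: "'w measure \<Rightarrow> ('w \<Rightarrow> real) \<Rightarrow> (real \<Rightarrow> real) \<Rightarrow> nat \<Rightarrow> real \<Rightarrow> real \<Rightarrow> real" where
  "FF M W k n x y = (\<integral>\<omega>. indicator {- real n..real n} (W \<omega>) * k (x + y * W \<omega>) \<partial>M)"

context
  fixes M :: "'w measure" and W :: "'w \<Rightarrow> real" and k :: "real \<Rightarrow> real"
  assumes P: "prob_space M" and Wm: "W \<in> borel_measurable M" and kc: "convex_on UNIV k"
begin

lemma k_cont: "continuous_on UNIV k"
  by (rule convex_on_continuous[OF open_UNIV kc])

lemma k_meas[measurable]: "k \<in> borel_measurable borel"
  by (rule borel_measurable_continuous_onI[OF k_cont])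

lemma FF_integrable: "integrable M (\<lambda>\<omega>. indicator {- real n..real n} (W \<omega>) * k (x + y * W \<omega>))"
proof -
  interpret prob_space M by (rule P)
  have "compact (k ` {x - \<bar>y\<bar> * n .. x + \<bar>y\<bar> * n})"
    by (intro compact_continuous_image continuous_on_subset[OF k_cont]) auto
  then obtain B where B: "\<And>t. t \<in> {x - \<bar>y\<bar> * n .. x + \<bar>y\<bar> * n} \<Longrightarrow> norm (k t) \<le> B"
    using compact_imp_bounded bounded_iff by (metis image_eqI)
  have "norm (indicator {- real n..real n} w * k (x + y * w)) \<le> max B 0" for w
  proof (cases "w \<in> {- real n..real n}")
    case True
    have "\<bar>y * w\<bar> \<le> \<bar>y\<bar> * n" using True by (auto simp: abs_mult intro!: mult_left_mono)
    then have "x + y * w \<in> {x - \<bar>y\<bar> * n .. x + \<bar>y\<bar> * n}" by auto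
    then show ?thesis using True B by fastforce
  qed simp
  then show ?thesis
    by (intro integrable_const_bound[where B="max B 0"]) (use Wm in auto)
qed

lemma FF_convex:
  assumes "0 \<le> l" "l \<le> 1"
  shows "FF M W k n (l * x1 + (1-l) * x2) (l * y1 + (1-l) * y2) \<le> l * FF M W k n x1 y1 + (1-l) * FF M W k n x2 y2"
proof -
  let ?I = "indicator {- real n..real n} :: real \<Rightarrow> real"
  have "FF M W k n (l * x1 + (1-l) * x2) (l * y1 + (1-l) * y2) \<le>
      (\<integral>\<omega>. l * (?I (W \<omega>) * k (x1 + y1 * W \<omega>)) + (1-l) * (?I (W \<omega>) * k (x2 + y2 * W \<omega>)) \<partial>M)"
    unfolding FF_def
  proof (intro integral_mono FF_integrable Bochner_Integration.integrable_add integrable_mult_right)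
    fix \<omega>
    have "k (l * x1 + (1-l) * x2 + (l * y1 + (1-l) * y2) * W \<omega>) = k (l * (x1 + y1 * W \<omega>) + (1-l) * (x2 + y2 * W \<omega>))"
      by (simp add: algebra_simps)
    also have "\<dots> \<le> l * k (x1 + y1 * W \<omega>) + (1-l) * k (x2 + y2 * W \<omega>)"
      using convex_onD[OF kc, of "1-l" "x1 + y1 * W \<omega>" "x2 + y2 * W \<omega>"] assms by simp
    finally show "?I (W \<omega>) * k (l * x1 + (1-l) * x2 + (l * y1 + (1-l) * y2) * W \<omega>)
        \<le> l * (?I (W \<omega>) * k (x1 + y1 * W \<omega>)) + (1-l) * (?I (W \<omega>) * k (x2 + y2 * W \<omega>))"
      by (auto simp: indicator_def algebra_simps)
  qed
  also have "\<dots> = l * FF M W k n x1 y1 + (1-l) * FF M W k n x2 y2"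
    unfolding FF_def
    by (subst Bochner_Integration.integral_add) (auto intro!: integrable_mult_right FF_integrable)
  finally show ?thesis .
qed

lemma FF_sym:
  assumes sym: "distr M lborel (\<lambda>\<omega>. - W \<omega>) = distr M lborel W"
  shows "FF M W k n x (- y) = FF M W k n x y"
proof -
  let ?I = "indicator {- real n..real n} :: real \<Rightarrow> real"
  define f where "f w = ?I w * k (x - y * w)" for w
  have fm[measurable]: "f \<in> borel_measurable lborel" unfolding f_def by measurable
  note Wm[measurable]
  have Wm'[measurable]: "W \<in> measurable M lborel" using Wm by simp
  have "FF M W k n x (- y) = (\<integral>\<omega>. f (W \<omega>) \<partial>M)" unfolding FF_def f_def by simp
  also have "\<dots> = (\<integral>w. f w \<partial>distr M lborel W)" by (rule integral_distr[symmetric]; measurable)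
  also have "\<dots> = (\<integral>w. f w \<partial>distr M lborel (\<lambda>\<omega>. - W \<omega>))" by (simp add: sym)
  also have "\<dots> = (\<integral>\<omega>. f (- W \<omega>) \<partial>M)" by (rule integral_distr; measurable)
  also have "\<dots> = FF M W k n x y" unfolding FF_def f_def
    by (intro Bochner_Integration.integral_cong) (auto simp: indicator_def)
  finally show ?thesis .
qed

lemma FF_mono:
  assumes sym: "distr M lborel (\<lambda>\<omega>. - W \<omega>) = distr M lborel W"
    and y: "0 \<le> y1" "y1 \<le> y2"
  shows "FF M W k n x y1 \<le> FF M W k n x y2"
proof (cases "y2 = 0")
  case True then show ?thesis using y by simp
next
  case False
  then have y2: "y2 > 0" using y by simp
  define l where "l = (y1 + y2) / (2 * y2)"
  have l: "0 \<le> l" "l \<le> 1" unfolding l_def using y y2 by (auto simp: field_simps)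
  have e: "y1 = l * y2 + (1 - l) * (- y2)" unfolding l_def using y2 by (simp add: field_simps)
  have "FF M W k n x y1 = FF M W k n (l * x + (1-l) * x) (l * y2 + (1 - l) * (- y2))"
  proof -
    have xx: "l * x + (1-l) * x = x" by (simp add: algebra_simps)
    show ?thesis by (simp only: xx e[symmetric])
  qed
  also have "\<dots> \<le> l * FF M W k n x y2 + (1-l) * FF M W k n x (- y2)"
    by (rule FF_convex[OF l])
  also have "\<dots> = FF M W k n x y2" by (simp add: FF_sym[OF sym] algebra_simps)
  finally show ?thesis .
qed

lemma g_convex:
  assumes sym: "distr M lborel (\<lambda>\<omega>. - W \<omega>) = distr M lborel W" and ta: "0 \<le> \<theta> * a"
  shows "convex_on UNIV (\<lambda>s. FF M W k n (s + \<Delta> * drift_b \<theta> \<mu> s) (sigma_hat \<theta> a s))"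
  unfolding convex_on_alt
proof (intro conjI ballI allI impI, simp, elim conjE)
  fix s1 s2 l :: real assume l: "0 \<le> l" "l \<le> 1"
  let ?lin = "\<lambda>s. s + \<Delta> * drift_b \<theta> \<mu> s"
  let ?g = "\<lambda>s. FF M W k n (?lin s) (sigma_hat \<theta> a s)"
  define s where "s = l * s1 + (1-l) * s2"
  have lin: "?lin s = l * ?lin s1 + (1-l) * ?lin s2"
    unfolding s_def drift_b_def by (simp add: algebra_simps)
  have "?g s \<le> FF M W k n (?lin s) (l * sigma_hat \<theta> a s1 + (1-l) * sigma_hat \<theta> a s2)"
    using sigma_hat_convex[OF ta l, of s1 s2] sigma_hat_nonneg[OF ta]
    unfolding s_def by (intro FF_mono[OF sym]) auto
  also have "\<dots> \<le> l * ?g s1 + (1-l) * ?g s2"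
    unfolding lin by (rule FF_convex[OF l])
  finally show "?g (l *\<^sub>R s1 + (1 - l) *\<^sub>R s2) \<le> l * ?g s1 + (1 - l) * ?g s2"
    unfolding s_def by simp
qed

end


lemma tonelli_indep:
  fixes S W :: "'w \<Rightarrow> real" and f :: "real \<times> real \<Rightarrow> ennreal"
  assumes P: "prob_space M" and ind: "prob_space.indep_var M borel S borel W"
    and fm[measurable]: "f \<in> borel_measurable (borel \<Otimes>\<^sub>M borel)"
  shows "(\<integral>\<^sup>+\<omega>. f (S \<omega>, W \<omega>) \<partial>M) = (\<integral>\<^sup>+\<omega>. (\<integral>\<^sup>+\<omega>'. f (S \<omega>, W \<omega>') \<partial>M) \<partial>M)"
proof -
  interpret prob_space M by (rule P)
  have rv[measurable]: "S \<in> borel_measurable M" "W \<in> borel_measurable M"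
    and eq: "distr M borel S \<Otimes>\<^sub>M distr M borel W = distr M (borel \<Otimes>\<^sub>M borel) (\<lambda>x. (S x, W x))"
    using ind[unfolded indep_var_distribution_eq] by auto
  interpret PW: prob_space "distr M borel W" by (rule prob_space_distr) simp
  interpret PS: prob_space "distr M borel S" by (rule prob_space_distr) simp
  have "(\<integral>\<^sup>+\<omega>. f (S \<omega>, W \<omega>) \<partial>M) = (\<integral>\<^sup>+z. f z \<partial>distr M (borel \<Otimes>\<^sub>M borel) (\<lambda>x. (S x, W x)))"
    by (rule nn_integral_distr[symmetric]) auto
  also have "\<dots> = (\<integral>\<^sup>+z. f z \<partial>(distr M borel S \<Otimes>\<^sub>M distr M borel W))" by (simp add: eq)
  also have "\<dots> = (\<integral>\<^sup>+s. (\<integral>\<^sup>+w. f (s, w) \<partial>distr M borel W) \<partial>distr M borel S)"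
    by (rule PW.nn_integral_fst[symmetric]) (subst measurable_cong_sets[OF sets_pair_measure_cong[OF sets_distr sets_distr] refl], rule fm)
  also have "\<dots> = (\<integral>\<^sup>+\<omega>. (\<integral>\<^sup>+w. f (S \<omega>, w) \<partial>distr M borel W) \<partial>M)"
  proof -
    define G where "G s = (\<integral>\<^sup>+w. f (s, w) \<partial>distr M borel W)" for s
    have [measurable]: "G \<in> borel_measurable borel"
      unfolding G_def using PW.borel_measurable_nn_integral_fst[of f "borel"] by simp
    have "(\<integral>\<^sup>+s. G s \<partial>distr M borel S) = (\<integral>\<^sup>+\<omega>. G (S \<omega>) \<partial>M)"
      by (rule nn_integral_distr) auto
    then show ?thesis unfolding G_def .
  qed
  also have "\<dots> = (\<integral>\<^sup>+\<omega>. (\<integral>\<^sup>+\<omega>'. f (S \<omega>, W \<omega>') \<partial>M) \<partial>M)"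
    by (intro nn_integral_cong nn_integral_distr) auto
  finally show ?thesis .
qed



lemma sigma_hat_meas[measurable]: "sigma_hat \<theta> a \<in> borel_measurable borel"
  unfolding sigma_hat_def by measurable

lemma sup_ind:
  fixes v w :: real assumes "0 \<le> v"
  shows "(SUP n. ennreal (indicator {- real n..real n} w * v)) = ennreal v"
proof (rule antisym)
  show "(SUP n. ennreal (indicator {- real n..real n} w * v)) \<le> ennreal v"
  proof (rule SUP_least)
    fix n :: nat
    show "ennreal (indicator {- real n..real n} w * v) \<le> ennreal v"
      using assms by (intro ennreal_leI) (simp add: indicator_def)
  qed
  obtain n :: nat where "\<bar>w\<bar> \<le> real n" using real_arch_simple by blast
  then have "ennreal v \<le> ennreal (indicator {- real n..real n} w * v)"
    by (simp add: indicator_def abs_le_iff)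
  then show "ennreal v \<le> (SUP n. ennreal (indicator {- real n..real n} w * v))"
    by (rule SUP_upper2[OF UNIV_I])
qed

lemma k_step:
  fixes M :: "'w measure" and S W :: "'w \<Rightarrow> real" and k lin sig :: "real \<Rightarrow> real"
  assumes P: "prob_space M" and ind: "prob_space.indep_var M borel S borel W"
    and kc: "convex_on UNIV k" and k0: "\<And>t. 0 \<le> k t"
    and [measurable]: "lin \<in> borel_measurable borel" "sig \<in> borel_measurable borel"
  shows "(\<integral>\<^sup>+\<omega>. ennreal (k (lin (S \<omega>) + sig (S \<omega>) * W \<omega>)) \<partial>M)
     = (SUP n. \<integral>\<^sup>+\<omega>. ennreal (FF M W k n (lin (S \<omega>)) (sig (S \<omega>))) \<partial>M)"
proof -
  interpret prob_space M by (rule P)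
  have rv[measurable]: "S \<in> borel_measurable M" "W \<in> borel_measurable M"
    using ind[unfolded indep_var_distribution_eq] by auto
  note km[measurable] = k_meas[OF P rv(2) kc]
  let ?f = "\<lambda>n \<omega>. ennreal (indicator {- real n..real n} (W \<omega>) * k (lin (S \<omega>) + sig (S \<omega>) * W \<omega>))"
  have "(\<integral>\<^sup>+\<omega>. ennreal (k (lin (S \<omega>) + sig (S \<omega>) * W \<omega>)) \<partial>M) = (\<integral>\<^sup>+\<omega>. (SUP n. ?f n \<omega>) \<partial>M)"
    by (simp add: sup_ind k0)
  also have "\<dots> = (SUP n. integral\<^sup>N M (?f n))"
  proof (rule nn_integral_monotone_convergence_SUP)
    show "incseq ?f"
      by (intro incseq_SucI le_funI ennreal_leI mult_right_mono)
         (auto simp: indicator_def k0)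
  next
    fix i show "?f i \<in> borel_measurable M" by measurable
  qed
  also have "\<dots> = (SUP n. \<integral>\<^sup>+\<omega>. ennreal (FF M W k n (lin (S \<omega>)) (sig (S \<omega>))) \<partial>M)"
  proof (rule SUP_cong[OF refl])
    fix n
    have "integral\<^sup>N M (?f n) = (\<integral>\<^sup>+\<omega>. (\<lambda>(s,w). ennreal (indicator {- real n..real n} w * k (lin s + sig s * w))) (S \<omega>, W \<omega>) \<partial>M)"
      by simp
    also have "\<dots> = (\<integral>\<^sup>+\<omega>. (\<integral>\<^sup>+\<omega>'. (\<lambda>(s,w). ennreal (indicator {- real n..real n} w * k (lin s + sig s * w))) (S \<omega>, W \<omega>') \<partial>M) \<partial>M)"
      by (rule tonelli_indep[OF P ind]) measurable
    also have "\<dots> = (\<integral>\<^sup>+\<omega>. ennreal (FF M W k n (lin (S \<omega>)) (sig (S \<omega>))) \<partial>M)"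
    proof (rule nn_integral_cong)
      fix \<omega>
      show "(\<integral>\<^sup>+\<omega>'. (\<lambda>(s,w). ennreal (indicator {- real n..real n} w * k (lin s + sig s * w))) (S \<omega>, W \<omega>') \<partial>M)
          = ennreal (FF M W k n (lin (S \<omega>)) (sig (S \<omega>)))"
        unfolding FF_def using FF_integrable[OF P rv(2) kc] k0
        by (simp, intro nn_integral_eq_integral) auto
    qed
    finally show "integral\<^sup>N M (?f n) = (\<integral>\<^sup>+\<omega>. ennreal (FF M W k n (lin (S \<omega>)) (sig (S \<omega>))) \<partial>M)" .
  qed
  finally show ?thesis .
qed



lemma ext_exp_integrable:
  assumes "finite_measure M" "integrable M f"
  shows "ext_expectation M f = ereal (\<integral>x. f x \<partial>M)"
  using ext_exp_split[OF assms(1), of f "\<lambda>_. 0" f] assms by (auto simp: zero_ennreal.rep_eq)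

lemma ext_exp_nonneg:
  assumes "finite_measure M" "f \<in> borel_measurable M" "\<And>x. 0 \<le> f x"
  shows "ext_expectation M f = enn2ereal (\<integral>\<^sup>+x. f x \<partial>M)"
  using ext_exp_split[OF assms(1), of f f "\<lambda>_. 0"] assms by auto

lemma sqrt_sq1_le: "sqrt (s\<^sup>2 + 1) \<le> \<bar>s\<bar> + 1"
proof -
  have "sqrt (s\<^sup>2 + 1) \<le> sqrt ((\<bar>s\<bar> + 1)\<^sup>2)"
    by (intro real_sqrt_le_mono) (simp add: power2_eq_square algebra_simps)
  then show ?thesis by simp
qed

theorem mainTheorem3:
  fixes M :: "'w measure" and S1 S2 W :: "'w \<Rightarrow> real"
    and \<theta> a \<mu> \<Delta> :: real
  assumes "prob_space M"
    and "\<theta> > 0" and "a > 0" and "\<Delta> > 0"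
    and "distributed M lborel W (normal_density 0 (sqrt \<Delta>))"
    and "S1 \<in> borel_measurable M" and "S2 \<in> borel_measurable M"
    and "prob_space.indep_var M borel S1 borel W"
    and "prob_space.indep_var M borel S2 borel W"
    and "integrable M S1" and "integrable M S2"
    and "\<forall>h::real \<Rightarrow> real. convex_on UNIV h \<longrightarrow>
           ext_expectation M (\<lambda>\<omega>. h (S1 \<omega>)) \<le> ext_expectation M (\<lambda>\<omega>. h (S2 \<omega>))"
  shows "\<forall>h::real \<Rightarrow> real. convex_on UNIV h \<longrightarrow>
           ext_expectation M (\<lambda>\<omega>. h (step_op \<theta> a \<mu> \<Delta> W S1 \<omega>))
             \<le> ext_expectation M (\<lambda>\<omega>. h (step_op \<theta> a \<mu> \<Delta> W S2 \<omega>))"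
proof -
  note P = assms(1)
  interpret prob_space M by (rule P)
  have fm: "finite_measure M" by unfold_locales
  have ta: "0 \<le> \<theta> * a" using assms(2,3) by simp
  have D: "0 < sqrt \<Delta>" using assms(4) by simp
  have Wm[measurable]: "W \<in> borel_measurable M"
    using distributed_measurable[OF assms(5)] by simp
  note [measurable] = assms(6,7)
  have WD: "distr M lborel W = density lborel (normal_density 0 (sqrt \<Delta>))"
    using distributed_distr_eq_density[OF assms(5)] .
  have "distributed M lborel (\<lambda>x. 0 + (-1) * W x) (normal_density (0 + (-1) * 0) (\<bar>-1\<bar> * sqrt \<Delta>))"
    by (rule normal_density_affine[OF assms(5) D]) simp
  then have "distributed M lborel (\<lambda>x. - W x) (normal_density 0 (sqrt \<Delta>))" by simp
  from distributed_distr_eq_density[OF this]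
  have sym: "distr M lborel (\<lambda>\<omega>. - W \<omega>) = distr M lborel W" using WD by simp
  have Wint: "integrable M W"
    using distributed_integrable[OF assms(5), of "\<lambda>x. x"] integrable_normal_moment_nz_1 D by simp
  have W0: "(\<integral>\<omega>. W \<omega> \<partial>M) = 0"
    using normal_distributed_expectation[OF D assms(5)] by simp

  let ?lin = "\<lambda>s. s + \<Delta> * drift_b \<theta> \<mu> s"
  let ?sig = "sigma_hat \<theta> a"
  have linm[measurable]: "?lin \<in> borel_measurable borel" unfolding drift_b_def by measurable
  have AS: "step_op \<theta> a \<mu> \<Delta> W S \<omega> = ?lin (S \<omega>) + ?sig (S \<omega>) * W \<omega>" for S \<omega>
    unfolding step_op_def by simp

  have mean_int: "integrable M (\<lambda>\<omega>. step_op \<theta> a \<mu> \<Delta> W S \<omega>)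
      \<and> (\<integral>\<omega>. step_op \<theta> a \<mu> \<Delta> W S \<omega> \<partial>M) = ?lin (\<integral>\<omega>. S \<omega> \<partial>M)"
    if Sm[measurable]: "S \<in> borel_measurable M" and ind: "indep_var borel S borel W" and Si: "integrable M S" for S
  proof -
    have sigi: "integrable M (\<lambda>\<omega>. ?sig (S \<omega>))"
    proof (rule Bochner_Integration.integrable_bound)
      show "integrable M (\<lambda>\<omega>. sqrt (2*\<theta>*a) * (\<bar>S \<omega>\<bar> + 1))"
        using Si by (intro integrable_mult_right Bochner_Integration.integrable_add integrable_abs) auto
      show "AE \<omega> in M. norm (?sig (S \<omega>)) \<le> norm (sqrt (2*\<theta>*a) * (\<bar>S \<omega>\<bar> + 1))"
      proof (intro AE_I2)
        fix \<omega>
        have "?sig (S \<omega>) = sqrt (2*\<theta>*a) * sqrt ((S \<omega>)\<^sup>2 + 1)"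
          unfolding sigma_hat_def by (simp add: real_sqrt_mult)
        also have "\<dots> \<le> sqrt (2*\<theta>*a) * (\<bar>S \<omega>\<bar> + 1)"
          using ta by (intro mult_left_mono sqrt_sq1_le) simp
        finally show "norm (?sig (S \<omega>)) \<le> norm (sqrt (2*\<theta>*a) * (\<bar>S \<omega>\<bar> + 1))"
          using sigma_hat_nonneg[OF ta] by simp
      qed
    qed measurable
    have ind2: "indep_var borel (\<lambda>\<omega>. ?sig (S \<omega>)) borel W"
      using indep_var_compose[OF ind, of ?sig borel id borel] by (simp add: comp_def)
    have pi: "integrable M (\<lambda>\<omega>. ?sig (S \<omega>) * W \<omega>)"
      by (rule indep_var_integrable[OF ind2 sigi Wint])
    have p0: "(\<integral>\<omega>. ?sig (S \<omega>) * W \<omega> \<partial>M) = 0"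
      using indep_var_lebesgue_integral[OF ind2 sigi Wint] W0 by simp
    have li: "integrable M (\<lambda>\<omega>. ?lin (S \<omega>))"
      unfolding drift_b_def using Si by (auto intro!: Bochner_Integration.integrable_add integrable_mult_right Bochner_Integration.integrable_diff)
    have "integrable M (\<lambda>\<omega>. ?lin (S \<omega>) + ?sig (S \<omega>) * W \<omega>)"
      using li pi by auto
    moreover have "(\<integral>\<omega>. ?lin (S \<omega>) + ?sig (S \<omega>) * W \<omega> \<partial>M) = ?lin (\<integral>\<omega>. S \<omega> \<partial>M)"
      using li pi Si p0 unfolding drift_b_def by (simp add: algebra_simps prob_space)
    ultimately show ?thesis unfolding AS by simp
  qed
  have cid: "convex_on UNIV (\<lambda>x::real. c * x)" for c
    by (simp add: convex_on_alt algebra_simps)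
  have ES: "(\<integral>\<omega>. S1 \<omega> \<partial>M) = (\<integral>\<omega>. S2 \<omega> \<partial>M)"
  proof -
    have "ext_expectation M (\<lambda>\<omega>. c * S1 \<omega>) \<le> ext_expectation M (\<lambda>\<omega>. c * S2 \<omega>)" for c
      using assms(12) cid[of c] by blast
    then have "ereal (\<integral>\<omega>. c * S1 \<omega> \<partial>M) \<le> ereal (\<integral>\<omega>. c * S2 \<omega> \<partial>M)" for c
      using ext_exp_integrable[OF fm] assms(10,11) by (metis integrable_mult_right)
    from this[of 1] this[of "-1"] show ?thesis by simp
  qed

  have kpart: "(\<integral>\<^sup>+\<omega>. ennreal (k (step_op \<theta> a \<mu> \<Delta> W S1 \<omega>)) \<partial>M)
      \<le> (\<integral>\<^sup>+\<omega>. ennreal (k (step_op \<theta> a \<mu> \<Delta> W S2 \<omega>)) \<partial>M)"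
    if kc: "convex_on UNIV k" and k0: "\<And>t. 0 \<le> k t" for k
  proof -
    let ?g = "\<lambda>n s. FF M W k n (?lin s) (?sig s)"
    have gc: "convex_on UNIV (?g n)" for n
      by (rule g_convex[OF P Wm kc sym ta])
    have gm[measurable]: "?g n \<in> borel_measurable borel" for n
      by (rule borel_measurable_continuous_onI[OF convex_on_continuous[OF open_UNIV gc]])
    have g0: "0 \<le> ?g n s" for n s
      unfolding FF_def by (intro Bochner_Integration.integral_nonneg) (auto simp: k0)
    have step: "(\<integral>\<^sup>+\<omega>. ennreal (?g n (S1 \<omega>)) \<partial>M) \<le> (\<integral>\<^sup>+\<omega>. ennreal (?g n (S2 \<omega>)) \<partial>M)" for n
    proof -
      have "ext_expectation M (\<lambda>\<omega>. ?g n (S1 \<omega>)) \<le> ext_expectation M (\<lambda>\<omega>. ?g n (S2 \<omega>))"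
        using assms(12) gc[of n] by blast
      then have "enn2ereal (\<integral>\<^sup>+\<omega>. ennreal (?g n (S1 \<omega>)) \<partial>M) \<le> enn2ereal (\<integral>\<^sup>+\<omega>. ennreal (?g n (S2 \<omega>)) \<partial>M)"
        by (subst (asm) (1 2) ext_exp_nonneg[OF fm]) (auto simp: g0)
      then show ?thesis by (simp add: less_eq_ennreal.rep_eq)
    qed
    have "(\<integral>\<^sup>+\<omega>. ennreal (k (step_op \<theta> a \<mu> \<Delta> W S1 \<omega>)) \<partial>M)
        = (SUP n. \<integral>\<^sup>+\<omega>. ennreal (?g n (S1 \<omega>)) \<partial>M)"
      unfolding AS by (rule k_step[OF P assms(8) kc k0]) measurable
    also have "\<dots> \<le> (SUP n. \<integral>\<^sup>+\<omega>. ennreal (?g n (S2 \<omega>)) \<partial>M)"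
      by (rule SUP_mono) (use step in blast)
    also have "\<dots> = (\<integral>\<^sup>+\<omega>. ennreal (k (step_op \<theta> a \<mu> \<Delta> W S2 \<omega>)) \<partial>M)"
      unfolding AS by (rule k_step[OF P assms(9) kc k0, symmetric]) measurable
    finally show ?thesis .
  qed

  show ?thesis
  proof (intro allI impI)
    fix h :: "real \<Rightarrow> real" assume hc: "convex_on UNIV h"
    obtain c where c: "\<And>t. h 0 + c * t \<le> h t" using convex_subgrad[OF hc] by blast
    define k where "k t = h t - (h 0 + c * t)" for t
    have k0: "0 \<le> k t" for t using c[of t] unfolding k_def by simp
    have kc: "convex_on UNIV k"
      using hc unfolding k_def convex_on_alt by (simp add: algebra_simps)
    have hm[measurable]: "h \<in> borel_measurable borel"
      by (rule borel_measurable_continuous_onI[OF convex_on_continuous[OF open_UNIV hc]])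
    have km[measurable]: "k \<in> borel_measurable borel" unfolding k_def by measurable
    have split: "ext_expectation M (\<lambda>\<omega>. h (step_op \<theta> a \<mu> \<Delta> W S \<omega>))
       = enn2ereal (\<integral>\<^sup>+\<omega>. ennreal (k (step_op \<theta> a \<mu> \<Delta> W S \<omega>)) \<partial>M)
         + ereal (h 0 + c * ?lin (\<integral>\<omega>. S \<omega> \<partial>M))"
      if Sm[measurable]: "S \<in> borel_measurable M" and ind: "indep_var borel S borel W" and Si: "integrable M S" for S
    proof -
      note mi = mean_int[OF Sm ind Si]
      have stm[measurable]: "(\<lambda>\<omega>. step_op \<theta> a \<mu> \<Delta> W S \<omega>) \<in> borel_measurable M"
        using mi by auto
      have Li: "integrable M (\<lambda>\<omega>. h 0 + c * step_op \<theta> a \<mu> \<Delta> W S \<omega>)"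
        using mi by auto
      have "ext_expectation M (\<lambda>\<omega>. h (step_op \<theta> a \<mu> \<Delta> W S \<omega>))
        = enn2ereal (\<integral>\<^sup>+\<omega>. ennreal (k (step_op \<theta> a \<mu> \<Delta> W S \<omega>)) \<partial>M)
         + ereal (\<integral>\<omega>. h 0 + c * step_op \<theta> a \<mu> \<Delta> W S \<omega> \<partial>M)"
        by (rule ext_exp_split[OF fm _ _ _ Li]) (auto simp: k0 k_def c)
      also have "(\<integral>\<omega>. h 0 + c * step_op \<theta> a \<mu> \<Delta> W S \<omega> \<partial>M) = h 0 + c * ?lin (\<integral>\<omega>. S \<omega> \<partial>M)"
        using mi by (simp add: prob_space)
      finally show ?thesis .
    qed
    show "ext_expectation M (\<lambda>\<omega>. h (step_op \<theta> a \<mu> \<Delta> W S1 \<omega>))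
             \<le> ext_expectation M (\<lambda>\<omega>. h (step_op \<theta> a \<mu> \<Delta> W S2 \<omega>))"
      unfolding split[OF assms(6,8,10)] split[OF assms(7,9,11)] ES
      using kpart[OF kc k0] by (intro add_right_mono) (simp add: less_eq_ennreal.rep_eq[symmetric])
  qed
qed

end
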